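(* Let $D$ be a crossing optimal normalized 2-page book drawing of $K_n$. Then the edges corresponding to the entries $(\lfloor n/2\rfloor,\lceil n/2\rceil+1)$, $(\lfloor n/2\rfloor,\lfloor n/2\rfloor+1)$ and $(\lceil n/2\rceil,\lceil n/2\rceil+1)$ of $M(D)$ are halving edges, i.e. $(\lfloor n/2\rfloor-1)$-edges.
   Context: Normalized 2-page book drawing of $K_n$: vertices $(1,0),\dots,(n,0)$ labelled $1,\dots,n$; edges $i(i+1)$ on the spine; edge $1n$ in the upper half-plane; every other edge $ij$ a semicircle over $[i,j]$ in the upper or lower half-plane. $M(D)$ has entries $(i,j)$, $1\le i<j\le n$, entry $(i,j)$ corresponding to edge $ij$. For distinct vertices $p,q,r$, $r$ is on the left (right) of $\overrightarrow{pq}$ if the triangle with edges $pq,qr,rp$ traced in order $p,q,r$ is counterclockwise (clockwise); an edge is a $k$-edge if exactly $k$ of the other $n-2$ vertices lie on one side of it. Crossing optimal: exactly $Z(n)=\frac14\lfloor\frac n2\rfloor\lfloor\frac{n-1}2\rfloor\lfloor\frac{n-2}2\rfloor\lfloor\frac{n-3}2\rfloor$ crossings. *)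

theory Defs
  imports Complex_Main
begin

text \<open>A normalized 2-page book drawing of K_n is determined by the page of each
non-spine edge ij (1 <= i, i+2 <= j <= n): upper (up i j = True) or lower
(up i j = False). Spine edges i(i+1) lie on the spine; edge 1n is upper.\<close>

definition normalized_2page :: "nat \<Rightarrow> (nat \<Rightarrow> nat \<Rightarrow> bool) \<Rightarrow> bool" where
  "normalized_2page n up \<longleftrightarrow> 3 \<le> n \<and> up 1 n"

text \<open>Two edges ij and kl cross iff they lie on the same page and interleave,
i < k < j < l (semicircles; spine edges cross nothing).\<close>

definition crossings :: "nat \<Rightarrow> (nat \<Rightarrow> nat \<Rightarrow> bool) \<Rightarrow> nat" where
  "crossings n up = card {(i, k, j, l). 1 \<le> i \<and> i < k \<and> k < j \<and> j < l \<and> l \<le> n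
                                        \<and> up i j = up k l}"

definition Z :: "nat \<Rightarrow> real" where
  "Z n = (1/4) * real (n div 2) * real ((n - 1) div 2) * real ((n - 2) div 2) * real ((n - 3) div 2)"

definition crossing_optimal :: "nat \<Rightarrow> (nat \<Rightarrow> nat \<Rightarrow> bool) \<Rightarrow> bool" where
  "crossing_optimal n up \<longleftrightarrow> real (crossings n up) = Z n"

text \<open>For a < b < c the closed curve a -> b -> c -> a goes left to right along the
spine/inner arcs and returns along the arc ac, which encloses them; hence it is
counterclockwise iff edge ac is in the upper page. Cyclic shifts preserve, and
transpositions reverse, the orientation.\<close>

definition ccw :: "(nat \<Rightarrow> nat \<Rightarrow> bool) \<Rightarrow> nat \<Rightarrow> nat \<Rightarrow> nat \<Rightarrow> bool" where
  "ccw up p q r =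
     (let a = min p (min q r); c = max p (max q r) in
      if (p < q \<and> q < r) \<or> (q < r \<and> r < p) \<or> (r < p \<and> p < q) then up a c else \<not> up a c)"

definition left_of :: "nat \<Rightarrow> (nat \<Rightarrow> nat \<Rightarrow> bool) \<Rightarrow> nat \<Rightarrow> nat \<Rightarrow> nat set" where
  "left_of n up p q = {r \<in> {1..n}. r \<noteq> p \<and> r \<noteq> q \<and> ccw up p q r}"

definition right_of :: "nat \<Rightarrow> (nat \<Rightarrow> nat \<Rightarrow> bool) \<Rightarrow> nat \<Rightarrow> nat \<Rightarrow> nat set" where
  "right_of n up p q = {r \<in> {1..n}. r \<noteq> p \<and> r \<noteq> q \<and> \<not> ccw up p q r}"

definition is_k_edge :: "nat \<Rightarrow> (nat \<Rightarrow> nat \<Rightarrow> bool) \<Rightarrow> nat \<Rightarrow> nat \<Rightarrow> nat \<Rightarrow> bool" where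
  "is_k_edge n up k p q \<longleftrightarrow> card (left_of n up p q) = k \<or> card (right_of n up p q) = k"

definition halving_edge :: "nat \<Rightarrow> (nat \<Rightarrow> nat \<Rightarrow> bool) \<Rightarrow> nat \<Rightarrow> nat \<Rightarrow> bool" where
  "halving_edge n up p q \<longleftrightarrow> is_k_edge n up (n div 2 - 1) p q"

end

theory Submission
  imports Defs
begin


definition lt :: "(nat\<Rightarrow>nat\<Rightarrow>bool) \<Rightarrow> nat \<Rightarrow> nat \<Rightarrow> nat \<Rightarrow> bool" where
  "lt x p q r = (if r < p then x r q else if r < q then \<not> x p q else x p r)"

definition Lf :: "(nat\<Rightarrow>nat\<Rightarrow>bool) \<Rightarrow> nat \<Rightarrow> nat \<Rightarrow> nat \<Rightarrow> nat \<Rightarrow> nat" where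
  "Lf x a b p q = (\<Sum>r=a..b. if r \<noteq> p \<and> r \<noteq> q \<and> lt x p q r then 1 else 0)"

definition kv :: "(nat\<Rightarrow>nat\<Rightarrow>bool) \<Rightarrow> nat \<Rightarrow> nat \<Rightarrow> nat \<Rightarrow> nat \<Rightarrow> nat" where
  "kv x a b p q = min (Lf x a b p q) (b - Suc a - Lf x a b p q)"

lemma Lf_Suc_b:
  assumes "a \<le> p" "p < q" "q \<le> b"
  shows "Lf x a (Suc b) p q = Lf x a b p q + (if x p (Suc b) then 1 else 0)"
  using assms by (simp add: Lf_def lt_def)

lemma Lf_Suc_a:
  assumes "a < p" "p < q" "q \<le> b"
  shows "Lf x a b p q = Lf x (Suc a) b p q + (if x a q then 1 else 0)"
proof -
  have "a \<le> b" using assms by simp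
  then show ?thesis using assms by (simp add: Lf_def lt_def sum.atLeast_Suc_atMost)
qed

lemma sum_ind_le_card:
  fixes P :: "nat \<Rightarrow> bool"
  shows "(\<Sum>r\<in>A. if P r then 1 else (0::nat)) \<le> card A"
  unfolding card_eq_sum by (rule sum_mono) simp

lemma Lf_le:
  assumes "a \<le> p" "p < q" "q \<le> b"
  shows "Lf x a b p q \<le> b - Suc a"
proof -
  have "Lf x a b p q = (\<Sum>r\<in>{a..b} - {p,q}. if lt x p q r then 1 else 0)"
    unfolding Lf_def
    by (rule sum.mono_neutral_cong_right) auto
  also have "\<dots> \<le> card ({a..b} - {p,q})" by (rule sum_ind_le_card)
  also have "\<dots> = b - Suc a" using assms by (simp add: card_Diff_subset)
  finally show ?thesis .
qed

lemma Lf_aa: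
  assumes "a < b"
  shows "Lf x a b a b = (if x a b then 0 else b - Suc a)"
proof -
  have "Lf x a b a b = (\<Sum>r\<in>{a<..<b}. if \<not> x a b then 1 else 0)"
    unfolding Lf_def
    by (rule sum.mono_neutral_cong_right) (auto simp: lt_def)
  then show ?thesis by simp
qed



lemma shift_inj:
  assumes "inj_on g S" "\<And>p. p \<in> S \<Longrightarrow> f p = g p + (c::nat)"
  shows "inj_on f S"
  unfolding inj_on_def
proof (intro ballI impI)
  fix p p' assume "p \<in> S" "p' \<in> S" "f p = f p'"
  then have "g p = g p'" using assms(2) by simp
  then show "p = p'" using assms(1) \<open>p \<in> S\<close> \<open>p' \<in> S\<close> inj_on_def by metis
qed

lemma shift_im:
  assumes "\<And>p. p \<in> S \<Longrightarrow> f p = g p + (c::nat)"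
  shows "f ` S = (\<lambda>j. j + c) ` (g ` S)"
  unfolding image_image by (rule image_cong) (simp_all add: assms)

lemma shift_set:
  "(\<lambda>j. j + (1::nat)) ` {..<N} = {1..N}"
proof -
  have "(\<lambda>j. j + (1::nat)) = Suc" by auto
  then show ?thesis by (simp add: image_Suc_lessThan)
qed

lemma perm_max:
  assumes "a \<le> V"
  shows "inj_on (\<lambda>p. Lf x a V p V) {a..<V} \<and> (\<lambda>p. Lf x a V p V) ` {a..<V} = {..<V-a}"
  using assms
proof (induction a rule: inc_induct)
  case base
  then show ?case by simp
next
  case (step a)
  let ?f = "\<lambda>p. Lf x a V p V" and ?g = "\<lambda>p. Lf x (Suc a) V p V"
  define c where "c = (if x a V then 1 else (0::nat))"
  have fg: "?f p = ?g p + c" if "p \<in> {Suc a..<V}" for p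
    using that Lf_Suc_a[of a p V V x] unfolding c_def by auto
  have fa: "?f a = (if x a V then 0 else V - Suc a)" using Lf_aa step by simp
  have S: "{a..<V} = insert a {Suc a..<V}" using step by auto
  have im: "?f ` {Suc a..<V} = (\<lambda>j. j + c) ` {..<V - Suc a}"
    using shift_im[of "{Suc a..<V}" ?f ?g c] fg step.IH by simp
  have inj1: "inj_on ?f {Suc a..<V}"
    using shift_inj[of ?g "{Suc a..<V}" ?f c] step.IH fg by simp
  have notin: "?f a \<notin> ?f ` {Suc a..<V}"
    using im fa unfolding c_def by auto
  have "inj_on ?f {a..<V}" using S inj1 notin by simp
  moreover have "?f ` {a..<V} = {..<V-a}"
  proof -
    have "?f ` {a..<V} = insert (?f a) ((\<lambda>j. j + c) ` {..<V - Suc a})" using S im by simp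
    also have "\<dots> = {..<V-a}"
    proof (cases "x a V")
      case True
      then have "(\<lambda>j. j + c) ` {..<V - Suc a} = {1..V - Suc a}" unfolding c_def
        using shift_set by simp
      then show ?thesis using True fa step by auto
    next
      case False
      then show ?thesis using fa step unfolding c_def by auto
    qed
    finally show ?thesis .
  qed
  ultimately show ?case by blast
qed

lemma perm_min:
  assumes "a \<le> b"
  shows "inj_on (\<lambda>q. Lf x a b a q) {Suc a..b} \<and> (\<lambda>q. Lf x a b a q) ` {Suc a..b} = {..<b-a}"
  using assms
proof (induction b rule: dec_induct)
  case base
  then show ?case by simp
next
  case (step b)
  let ?f = "\<lambda>q. Lf x a (Suc b) a q" and ?g = "\<lambda>q. Lf x a b a q"
  define c where "c = (if x a (Suc b) then 1 else (0::nat))"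
  have fg: "?f q = ?g q + c" if "q \<in> {Suc a..b}" for q
    using that Lf_Suc_b[of a a q b x] unfolding c_def by auto
  have fa: "?f (Suc b) = (if x a (Suc b) then 0 else b - a)" using Lf_aa step by simp
  have S: "{Suc a..Suc b} = insert (Suc b) {Suc a..b}" using step by auto
  have im: "?f ` {Suc a..b} = (\<lambda>j. j + c) ` {..<b - a}"
    using shift_im[of "{Suc a..b}" ?f ?g c] fg step.IH by simp
  have inj1: "inj_on ?f {Suc a..b}"
    using shift_inj[of ?g "{Suc a..b}" ?f c] step.IH fg by simp
  have notin: "?f (Suc b) \<notin> ?f ` {Suc a..b}"
    using im fa unfolding c_def by auto
  have "inj_on ?f {Suc a..Suc b}" using S inj1 notin by simp
  moreover have "?f ` {Suc a..Suc b} = {..<Suc b-a}"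
  proof -
    have "?f ` {Suc a..Suc b} = insert (?f (Suc b)) ((\<lambda>j. j + c) ` {..<b - a})" using S im by simp
    also have "\<dots> = {..<Suc b-a}"
    proof (cases "x a (Suc b)")
      case True
      then have "(\<lambda>j. j + c) ` {..<b - a} = {1..b - a}" unfolding c_def
        using shift_set by simp
      then show ?thesis using True fa step by auto
    next
      case False
      then show ?thesis using fa step unfolding c_def by auto
    qed
    finally show ?thesis .
  qed
  ultimately show ?case by blast
qed

lemma sum_max:
  assumes "a \<le> V"
  shows "(\<Sum>p=a..<V. h (Lf x a V p V)) = (\<Sum>j<V-a. h j)"
proof -
  have P: "inj_on (\<lambda>p. Lf x a V p V) {a..<V} \<and> (\<lambda>p. Lf x a V p V) ` {a..<V} = {..<V-a}"
    by (rule perm_max[OF assms])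
  have "(\<Sum>j<V-a. h j) = (\<Sum>j\<in>(\<lambda>p. Lf x a V p V) ` {a..<V}. h j)" using P by simp
  also have "\<dots> = (\<Sum>p=a..<V. h (Lf x a V p V))" using sum.reindex[OF conjunct1[OF P]] by simp
  finally show ?thesis by simp
qed

lemma sum_min:
  assumes "a \<le> b"
  shows "(\<Sum>q=Suc a..b. h (Lf x a b a q)) = (\<Sum>j<b-a. h j)"
proof -
  have P: "inj_on (\<lambda>q. Lf x a b a q) {Suc a..b} \<and> (\<lambda>q. Lf x a b a q) ` {Suc a..b} = {..<b-a}"
    by (rule perm_min[OF assms])
  have "(\<Sum>j<b-a. h j) = (\<Sum>j\<in>(\<lambda>q. Lf x a b a q) ` {Suc a..b}. h j)" using P by simp
  also have "\<dots> = (\<Sum>q=Suc a..b. h (Lf x a b a q))" using sum.reindex[OF conjunct1[OF P]] by simp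
  finally show ?thesis by simp
qed



definition ind :: "(nat\<Rightarrow>nat\<Rightarrow>bool) \<Rightarrow> nat \<Rightarrow> nat \<Rightarrow> nat \<Rightarrow> nat \<Rightarrow> nat \<Rightarrow> bool" where
  "ind x u a b p q \<longleftrightarrow> kv x a b p q < u \<and> kv x a (Suc b) p q = kv x a b p q"

definition Ec :: "(nat\<Rightarrow>nat\<Rightarrow>bool) \<Rightarrow> nat \<Rightarrow> nat \<Rightarrow> nat \<Rightarrow> nat" where
  "Ec x u a b = (\<Sum>q=a..b. \<Sum>p=a..<q. if ind x u a b p q then 1 else 0)"

definition Wt :: "(nat\<Rightarrow>nat\<Rightarrow>bool) \<Rightarrow> nat \<Rightarrow> nat \<Rightarrow> nat \<Rightarrow> nat" where
  "Wt x u a b = (\<Sum>q=a..b. \<Sum>p=a..<q. u - kv x a b p q)"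

lemma kv_step:
  assumes "a \<le> p" "p < q" "q \<le> b"
  shows "Suc u - kv x a (Suc b) p q = (u - kv x a b p q) + (if ind x (Suc u) a b p q then 1 else 0)"
proof -
  have e: "Lf x a (Suc b) p q = Lf x a b p q + (if x p (Suc b) then 1 else 0)"
    using Lf_Suc_b assms by blast
  have le: "Lf x a b p q \<le> b - Suc a" using Lf_le assms by blast
  have ab: "Suc a \<le> b" using assms by simp
  show ?thesis unfolding ind_def kv_def e using le ab
    by (simp add: min_def split: if_splits; arith)
qed



lemma Wt_rec:
  assumes "a \<le> b"
  shows "Wt x (Suc u) a (Suc b) = Wt x u a b + (\<Sum>p=a..b. Suc u - kv x a (Suc b) p (Suc b)) + Ec x (Suc u) a b"
proof -
  have "Wt x (Suc u) a (Suc b) = (\<Sum>q=a..b. \<Sum>p=a..<q. Suc u - kv x a (Suc b) p q)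
        + (\<Sum>p=a..<Suc b. Suc u - kv x a (Suc b) p (Suc b))"
    unfolding Wt_def using assms by (simp add: sum.cl_ivl_Suc)
  also have "(\<Sum>q=a..b. \<Sum>p=a..<q. Suc u - kv x a (Suc b) p q)
      = (\<Sum>q=a..b. \<Sum>p=a..<q. (u - kv x a b p q) + (if ind x (Suc u) a b p q then 1 else 0))"
    by (intro sum.cong refl) (simp add: kv_step)
  also have "\<dots> = Wt x u a b + Ec x (Suc u) a b"
    unfolding Wt_def Ec_def by (simp add: sum.distrib)
  also have "{a..<Suc b} = {a..b}" by auto
  finally show ?thesis by simp
qed

lemma tri_sum: "u < N \<Longrightarrow> 2 * (\<Sum>j<N. Suc u - j) = (u+1)*(u+2)"
proof (induction u)
  case 0
  have "(\<Sum>j<N. Suc 0 - j) = (\<Sum>j\<in>{0}. Suc 0 - j)"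
    by (rule sum.mono_neutral_right) (use 0 in auto)
  then show ?case by simp
next
  case (Suc u)
  have "(\<Sum>j<N. Suc (Suc u) - j) = (\<Sum>j<N. (Suc u - j) + (if j \<le> Suc u then 1 else 0))"
    by (intro sum.cong refl) auto
  also have "\<dots> = (\<Sum>j<N. Suc u - j) + (\<Sum>j<N. if j \<le> Suc u then 1 else 0)"
    by (simp add: sum.distrib)
  also have "(\<Sum>j<N. if j \<le> Suc u then 1 else (0::nat)) = card {j\<in>{..<N}. j \<le> Suc u}"
    by (simp add: sum.inter_filter[symmetric])
  also have "{j\<in>{..<N}. j \<le> Suc u} = {..Suc u}" using Suc.prems by auto
  finally show ?case using Suc by simp
qed

lemma edge_sum_arith:
  assumes "2*u < M"
  shows "(\<Sum>j<Suc M. Suc u - min j (M - j)) = (u+1)*(u+2)"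
proof -
  have "(\<Sum>j<Suc M. Suc u - min j (M - j)) = (\<Sum>j<Suc M. (Suc u - j) + (Suc u - (Suc M - Suc j)))"
    by (intro sum.cong refl) (use assms in \<open>auto simp: min_def\<close>)
  also have "\<dots> = (\<Sum>j<Suc M. Suc u - j) + (\<Sum>j<Suc M. Suc u - (Suc M - Suc j))"
    by (simp add: sum.distrib)
  also have "(\<Sum>j<Suc M. Suc u - (Suc M - Suc j)) = (\<Sum>j<Suc M. Suc u - j)"
    by (rule sum.nat_diff_reindex)
  finally show ?thesis using tri_sum[of u "Suc M"] assms by simp
qed

lemma edge_sum:
  assumes "a \<le> b" "2 * Suc u \<le> b - a + 1"
  shows "(\<Sum>p=a..b. Suc u - kv x a (Suc b) p (Suc b)) = (u+1)*(u+2)"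
proof -
  have "{a..b} = {a..<Suc b}" by auto
  then have "(\<Sum>p=a..b. Suc u - kv x a (Suc b) p (Suc b))
      = (\<Sum>p=a..<Suc b. (\<lambda>j. Suc u - min j (b - a - j)) (Lf x a (Suc b) p (Suc b)))"
    unfolding kv_def by simp
  also have "\<dots> = (\<Sum>j<Suc b - a. Suc u - min j (b - a - j))"
    using assms by (intro sum_max) simp
  also have "Suc b - a = Suc (b - a)" using assms by simp
  finally show ?thesis using edge_sum_arith[of u "b-a"] assms by simp
qed

lemma Ec_split:
  assumes "a \<le> b"
  shows "Ec x v a b = (\<Sum>q=Suc a..b. if ind x v a b a q then 1 else 0)
           + (\<Sum>q=Suc a..b. \<Sum>p=Suc a..<q. if ind x v a b p q then 1 else 0)"
proof -
  have "Ec x v a b = (\<Sum>q=Suc a..b. \<Sum>p=a..<q. if ind x v a b p q then 1 else 0)"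
    unfolding Ec_def using assms by (simp add: sum.atLeast_Suc_atMost)
  also have "\<dots> = (\<Sum>q=Suc a..b. (if ind x v a b a q then 1 else 0) + (\<Sum>p=Suc a..<q. if ind x v a b p q then 1 else 0))"
    by (intro sum.cong refl) (simp add: sum.atLeast_Suc_lessThan)
  finally show ?thesis by (simp add: sum.distrib)
qed

lemma count_arith:
  assumes "2 * v \<le> M + 1" and that: "c = 0 \<or> c = 1"
  shows "(\<Sum>j<M. if min j (M - 1 - j) < v \<and> min (j + c) (M - (j + c)) = min j (M - 1 - j) then 1 else (0::nat)) = v"
proof -
  have "(\<Sum>j<M. if min j (M - 1 - j) < v \<and> min (j + c) (M - (j + c)) = min j (M - 1 - j) then 1 else (0::nat))
     = card {j\<in>{..<M}. min j (M - 1 - j) < v \<and> min (j + c) (M - (j + c)) = min j (M - 1 - j)}"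
    by (simp add: sum.inter_filter[symmetric])
  also have "{j\<in>{..<M}. min j (M - 1 - j) < v \<and> min (j + c) (M - (j + c)) = min j (M - 1 - j)}
      = (if c = 1 then {M-v..<M} else {..<v})"
    using that assms by (auto simp: min_def split: if_splits)
  also have "card \<dots> = v" using that assms by auto
  finally show ?thesis .
qed



lemma count_Ec_a:
  assumes "a \<le> b" "2 * v \<le> b - a + 1"
  shows "(\<Sum>q=Suc a..b. if ind x v a b a q then 1 else (0::nat)) = v"
proof -
  define c where "c = (if x a (Suc b) then 1 else (0::nat))"
  define h where "h = (\<lambda>j. if min j (b - a - 1 - j) < v \<and> min (j + c) (b - a - (j + c)) = min j (b - a - 1 - j) then 1 else (0::nat))"
  have "(\<Sum>q=Suc a..b. if ind x v a b a q then 1 else (0::nat)) = (\<Sum>q=Suc a..b. h (Lf x a b a q))"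
  proof (intro sum.cong refl)
    fix q assume q: "q \<in> {Suc a..b}"
    have e: "Lf x a (Suc b) a q = Lf x a b a q + c"
      using Lf_Suc_b[of a a q b x] q unfolding c_def by auto
    show "(if ind x v a b a q then 1 else 0) = h (Lf x a b a q)"
      unfolding h_def ind_def kv_def e using q by (simp add: Suc_diff_Suc)
  qed
  also have "\<dots> = (\<Sum>j<b-a. h j)" using assms by (intro sum_min) simp
  also have "\<dots> = v" unfolding h_def
    using count_arith[of v "b-a" c] assms unfolding c_def by auto
  finally show ?thesis .
qed

lemma ar_mono:
  fixes L M u al be :: nat
  assumes "L \<le> M" "2*u \<le> M+1" "al \<le> 1" "be \<le> 1"
    "min L (M - L) < u" "min (L+be) (M+1-(L+be)) = min L (M - L)"
  shows "min (L+al) (M+1-(L+al)) < Suc u \<and> min (L+al+be) (M+2-(L+al+be)) = min (L+al) (M+1-(L+al))"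
proof -
  have "al = 0 \<or> al = 1" "be = 0 \<or> be = 1" using assms by auto
  then show ?thesis using assms by (auto simp: min_def split: if_splits)
qed

lemma ind_mono:
  assumes "Suc a \<le> p" "p < q" "q \<le> b" "2 * Suc u \<le> b - a + 1" "ind x u (Suc a) b p q"
  shows "ind x (Suc u) a b p q"
proof -
  define L where "L = Lf x (Suc a) b p q"
  define M where "M = b - Suc (Suc a)"
  define al where "al = (if x a q then 1 else (0::nat))"
  define be where "be = (if x p (Suc b) then 1 else (0::nat))"
  have e1: "Lf x a b p q = L + al"
    using Lf_Suc_a assms unfolding L_def al_def by simp
  have e2: "Lf x (Suc a) (Suc b) p q = L + be"
    using Lf_Suc_b assms unfolding L_def be_def by blast
  have e3: "Lf x a (Suc b) p q = L + al + be"
    using Lf_Suc_b assms e1 unfolding be_def by simp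
  have le: "L \<le> M" using Lf_le assms unfolding L_def M_def by blast
  have m1: "b - Suc a = M + 1" "Suc b - Suc a = M + 2" "Suc b - Suc (Suc a) = M + 1"
    using assms unfolding M_def by auto
  have h: "min L (M - L) < u" "min (L+be) (M+1-(L+be)) = min L (M - L)"
    using assms(5) unfolding ind_def kv_def e2 m1 by (simp_all add: L_def M_def)
  have "2*u \<le> M+1" using assms(4) m1 by simp
  then have g: "min (L+al) (M+1-(L+al)) < Suc u \<and> min (L+al+be) (M+2-(L+al+be)) = min (L+al) (M+1-(L+al))"
    using ar_mono[OF le _ _ _ h] unfolding al_def be_def by simp
  show ?thesis unfolding ind_def kv_def e1 e3 m1 using g by simp
qed



lemma ar_cases:
  fixes L M be :: nat
  assumes "L \<le> M" "be \<le> 1"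
  shows "min (L+be) (M+1-(L+be)) = min L (M - L) \<or> min (L+be) (M+1-(L+be)) = Suc (min L (M - L))"
proof -
  have "be = 0 \<or> be = 1" using assms by auto
  then show ?thesis using assms by (auto simp: min_def)
qed

lemma kv_cases:
  assumes "a \<le> p" "p < q" "q \<le> b"
  shows "kv x a (Suc b) p q = kv x a b p q \<or> kv x a (Suc b) p q = Suc (kv x a b p q)"
proof -
  define be where "be = (if x p (Suc b) then 1 else (0::nat))"
  have e: "Lf x a (Suc b) p q = Lf x a b p q + be"
    using Lf_Suc_b assms unfolding be_def by blast
  have le: "Lf x a b p q \<le> b - Suc a" using Lf_le assms by blast
  have m: "Suc b - Suc a = (b - Suc a) + 1" using assms by simp
  show ?thesis unfolding kv_def e m using ar_cases[OF le, of be] unfolding be_def by simp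
qed

lemma nested_mono:
  assumes "\<And>q p. q \<in> A \<Longrightarrow> p \<in> B q \<Longrightarrow> (f p q::nat) \<le> g p q"
  shows "(\<Sum>q\<in>A. \<Sum>p\<in>B q. f p q) \<le> (\<Sum>q\<in>A. \<Sum>p\<in>B q. g p q)"
  by (intro sum_mono) (simp add: assms)

lemma nested_strict:
  assumes "finite A" "\<And>q. finite (B q)" "\<And>q p. q \<in> A \<Longrightarrow> p \<in> B q \<Longrightarrow> (f p q::nat) \<le> g p q"
    "qq \<in> A" "pp \<in> B qq" "f pp qq < g pp qq"
  shows "(\<Sum>q\<in>A. \<Sum>p\<in>B q. f p q) < (\<Sum>q\<in>A. \<Sum>p\<in>B q. g p q)"
proof (rule sum_strict_mono_ex1[OF assms(1)])
  show "\<forall>q\<in>A. (\<Sum>p\<in>B q. f p q) \<le> (\<Sum>p\<in>B q. g p q)" using assms(3) by (simp add: sum_mono)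
  have h1: "\<forall>p\<in>B qq. f p qq \<le> g p qq" using assms(3,4) by simp
  have h2: "\<exists>p\<in>B qq. f p qq < g p qq" using assms(5,6) by (rule bexI[rotated])
  have "(\<Sum>p\<in>B qq. f p qq) < (\<Sum>p\<in>B qq. g p qq)"
    by (rule sum_strict_mono_ex1[OF assms(2) h1 h2])
  then show "\<exists>q\<in>A. (\<Sum>p\<in>B q. f p q) < (\<Sum>p\<in>B q. g p q)" using assms(4) by blast
qed


lemma EcB:
  assumes "2*v \<le> b - a + 1"
  shows "2 * Ec x v a b \<ge> v*(v+1) + (if a + v \<le> p \<and> p < q \<and> q \<le> b \<and> ind x v a b p q then 2 else 0)"
  using assms
proof (induction v arbitrary: a)
  case 0
  then show ?case by (simp add: ind_def)
next
  case (Suc v)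
  have ab: "a \<le> b" using Suc.prems by simp
  define S2 where "S2 = (\<Sum>q=Suc a..b. \<Sum>p=Suc a..<q. if ind x (Suc v) a b p q then 1 else (0::nat))"
  have E: "Ec x (Suc v) a b = Suc v + S2"
    unfolding S2_def using Ec_split[OF ab, of x "Suc v"] count_Ec_a[OF ab Suc.prems] by simp
  have E': "Ec x v (Suc a) b = (\<Sum>q=Suc a..b. \<Sum>p=Suc a..<q. if ind x v (Suc a) b p q then 1 else (0::nat))"
    unfolding Ec_def by simp
  have pt: "(if ind x v (Suc a) b p' q' then 1 else (0::nat)) \<le> (if ind x (Suc v) a b p' q' then 1 else 0)"
    if "q' \<in> {Suc a..b}" "p' \<in> {Suc a..<q'}" for p' q'
    using ind_mono[of a p' q' b v x] that Suc.prems by auto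
  have mono: "Ec x v (Suc a) b \<le> S2" unfolding E' S2_def
    by (rule nested_mono) (rule pt)
  have IH: "2 * Ec x v (Suc a) b \<ge> v*(v+1) + (if Suc a + v \<le> p \<and> p < q \<and> q \<le> b \<and> ind x v (Suc a) b p q then 2 else 0)"
    using Suc.IH[of "Suc a"] Suc.prems by simp
  show ?case
  proof (cases "a + Suc v \<le> p \<and> p < q \<and> q \<le> b \<and> ind x (Suc v) a b p q")
    case True
    have "2 * S2 \<ge> v*(v+1) + 2"
    proof (cases "ind x v (Suc a) b p q")
      case True2: True
      then show ?thesis using IH True mono by simp
    next
      case False2: False
      have "Ec x v (Suc a) b < S2" unfolding E' S2_def
        apply (rule nested_strict[where qq=q and pp=p])
        using pt True False2 by auto
      then show ?thesis using IH by simp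
    qed
    then show ?thesis using True E by (simp add: algebra_simps)
  next
    case False
    have "2 * S2 \<ge> v*(v+1)" using IH mono by simp
    then have "2 * Ec x (Suc v) a b \<ge> Suc v * (Suc v + 1)" using E by (simp add: algebra_simps)
    then show ?thesis by (simp only: if_not_P[OF False] add_0_right)
  qed
qed


lemma WtB:
  assumes "2*v \<le> b - a"
  shows "2 * Wt x v a b \<ge> v*(v+1)*(v+2) + (if a + v \<le> p \<and> p < q \<and> q + v \<le> b \<and> kv x a b p q < v then 2 else 0)"
  using assms
proof (induction v arbitrary: b)
  case 0
  then show ?case by simp
next
  case (Suc v)
  obtain b' where b': "b = Suc b'" using Suc.prems by (cases b) auto
  have ab: "a \<le> b'" using Suc.prems b' by simp
  have R: "Wt x (Suc v) a b = Wt x v a b' + (v+1)*(v+2) + Ec x (Suc v) a b'"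
    using Wt_rec[OF ab, of x v] edge_sum[OF ab, of v x] Suc.prems b' by simp
  have IH: "2 * Wt x v a b' \<ge> v*(v+1)*(v+2) + (if a + v \<le> p \<and> p < q \<and> q + v \<le> b' \<and> kv x a b' p q < v then 2 else 0)"
    using Suc.IH[of b'] Suc.prems b' by simp
  have EC: "2 * Ec x (Suc v) a b' \<ge> (Suc v)*(Suc v+1) + (if a + Suc v \<le> p \<and> p < q \<and> q \<le> b' \<and> ind x (Suc v) a b' p q then 2 else 0)"
    using EcB[where v="Suc v" and b=b' and a=a and x=x and p=p and q=q] Suc.prems b' by simp
  have flag: "(if a + Suc v \<le> p \<and> p < q \<and> q + Suc v \<le> b \<and> kv x a b p q < Suc v then 2 else 0)
     \<le> (if a + v \<le> p \<and> p < q \<and> q + v \<le> b' \<and> kv x a b' p q < v then 2 else 0)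
       + (if a + Suc v \<le> p \<and> p < q \<and> q \<le> b' \<and> ind x (Suc v) a b' p q then 2 else (0::nat))"
  proof (cases "a + Suc v \<le> p \<and> p < q \<and> q + Suc v \<le> b \<and> kv x a b p q < Suc v")
    case True
    have c: "kv x a b p q = kv x a b' p q \<or> kv x a b p q = Suc (kv x a b' p q)"
      using kv_cases[of a p q b' x] True b' by simp
    show ?thesis using True c b' unfolding ind_def by auto
  qed simp
  show ?case using R IH EC flag by (simp add: algebra_simps)
qed



definition Xs :: "(nat\<Rightarrow>nat\<Rightarrow>bool) \<Rightarrow> nat \<Rightarrow> nat \<Rightarrow> nat" where
  "Xs x v N = (\<Sum>j=1..N. \<Sum>k=1..N. \<Sum>i=1..N. if i < k \<and> k < j \<and> x i j = x k v then 1 else 0)"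

lemma card_triple:
  fixes P :: "nat \<Rightarrow> nat \<Rightarrow> nat \<Rightarrow> bool" and N :: nat
  shows
  "card {(i,k,j). 1 \<le> i \<and> i < k \<and> k < j \<and> j \<le> N \<and> P i k j} =
   (\<Sum>j=1..N. \<Sum>k=1..N. \<Sum>i=1..N. if i < k \<and> k < j \<and> P i k j then 1 else 0)"
proof -
  let ?S = "{1..N} \<times> {1..N} \<times> {1..N}"
  let ?Q = "\<lambda>(i,k,j). i < k \<and> k < j \<and> P i k j"
  have "{(i,k,j). 1 \<le> i \<and> i < k \<and> k < j \<and> j \<le> N \<and> P i k j} = {t \<in> ?S. ?Q t}" by auto
  then have "card {(i,k,j). 1 \<le> i \<and> i < k \<and> k < j \<and> j \<le> N \<and> P i k j} = (\<Sum>t\<in>{t \<in> ?S. ?Q t}. 1)"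
    by (simp only: card_eq_sum)
  also have "\<dots> = (\<Sum>t\<in>?S. if ?Q t then 1 else 0)"
    by (rule sum.inter_filter) simp
  also have "\<dots> = (\<Sum>i=1..N. \<Sum>(k,j)\<in>{1..N}\<times>{1..N}. if i < k \<and> k < j \<and> P i k j then 1 else 0)"
    by (simp add: sum.cartesian_product case_prod_unfold)
  also have "\<dots> = (\<Sum>i=1..N. \<Sum>k=1..N. \<Sum>j=1..N. if i < k \<and> k < j \<and> P i k j then 1 else 0)"
    by (simp add: sum.cartesian_product case_prod_unfold)
  also have "\<dots> = (\<Sum>i=1..N. \<Sum>j=1..N. \<Sum>k=1..N. if i < k \<and> k < j \<and> P i k j then 1 else 0)"
    by (rule sum.cong[OF refl], rule sum.swap)
  also have "\<dots> = (\<Sum>j=1..N. \<Sum>i=1..N. \<Sum>k=1..N. if i < k \<and> k < j \<and> P i k j then 1 else 0)"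
    by (rule sum.swap)
  also have "\<dots> = (\<Sum>j=1..N. \<Sum>k=1..N. \<Sum>i=1..N. if i < k \<and> k < j \<and> P i k j then 1 else 0)"
    by (rule sum.cong[OF refl], rule sum.swap)
  finally show ?thesis .
qed

lemma cr_rec:
  "crossings (Suc n) up = crossings n up + Xs up (Suc n) n"
proof -
  define A where "A = (\<lambda>N. {(i, k, j, l). 1 \<le> i \<and> i < k \<and> k < j \<and> j < l \<and> l \<le> N \<and> up i j = up k l})"
  define T where "T = {(i,k,j). 1 \<le> i \<and> i < k \<and> k < j \<and> j \<le> n \<and> up i j = up k (Suc n)}"
  have cA: "crossings N up = card (A N)" for N unfolding crossings_def A_def by simp
  have fin: "finite (A N)" for N
  proof -
    have "A N \<subseteq> {0..N} \<times> {0..N} \<times> {0..N} \<times> {0..N}" unfolding A_def by auto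
    then show ?thesis by (rule finite_subset) simp
  qed
  have U: "A (Suc n) = A n \<union> (\<lambda>(i,k,j). (i,k,j,Suc n)) ` T"
    unfolding A_def T_def by (auto simp: image_iff le_Suc_eq)
  have disj: "A n \<inter> (\<lambda>(i,k,j). (i,k,j,Suc n)) ` T = {}" unfolding A_def T_def by auto
  have inj: "inj_on (\<lambda>(i,k,j). (i::nat,k::nat,j::nat,Suc n)) T" by (auto simp: inj_on_def)
  have finT: "finite T"
  proof -
    have "T \<subseteq> {0..n} \<times> {0..n} \<times> {0..n}" unfolding T_def by auto
    then show ?thesis by (rule finite_subset) simp
  qed
  have "card (A (Suc n)) = card (A n) + card T"
    unfolding U using card_Un_disjoint[OF fin finite_imageI[OF finT] disj] card_image[OF inj] by simp
  moreover have "card T = Xs up (Suc n) n" unfolding T_def Xs_def by (rule card_triple)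
  ultimately show ?thesis using cA by simp
qed



lemma sum_ne2:
  assumes "a \<le> p" "p < q" "q \<le> b"
  shows "(\<Sum>r=a..b. if r \<noteq> p \<and> r \<noteq> q then 1 else (0::nat)) = b - Suc a"
proof -
  have s: "{r\<in>{a..b}. r \<noteq> p \<and> r \<noteq> q} = {a..b} - {p,q}" by auto
  have "(\<Sum>r=a..b. if r \<noteq> p \<and> r \<noteq> q then 1 else (0::nat)) = card {r\<in>{a..b}. r \<noteq> p \<and> r \<noteq> q}"
    using sum.inter_filter[of "{a..b}" "\<lambda>_. (1::nat)" "\<lambda>r. r \<noteq> p \<and> r \<noteq> q"] by simp
  also have "\<dots> = card ({a..b} - {p,q})" using s by simp
  also have "\<dots> = b - Suc a" using assms by (simp add: card_Diff_subset)
  finally show ?thesis .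
qed

lemma Rg_eq:
  assumes "a \<le> p" "p < q" "q \<le> b"
  shows "(\<Sum>r=a..b. if r \<noteq> p \<and> r \<noteq> q \<and> \<not> lt x p q r then 1 else (0::nat)) = b - Suc a - Lf x a b p q"
proof -
  have "(\<Sum>r=a..b. if r \<noteq> p \<and> r \<noteq> q \<and> \<not> lt x p q r then 1 else (0::nat)) + Lf x a b p q
      = (\<Sum>r=a..b. if r \<noteq> p \<and> r \<noteq> q then 1 else (0::nat))"
    unfolding Lf_def by (simp add: sum.distrib[symmetric]) (intro sum.cong refl, auto)
  then show ?thesis using sum_ne2[OF assms] by simp
qed

lemma inner_range:
  assumes "q \<le> Suc N"
  shows "(\<Sum>p=1..<q. f p) = (\<Sum>p=1..N. if p < q then f p else (0::nat))"
proof -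
  have "(\<Sum>p=1..N. if p < q then f p else (0::nat)) = (\<Sum>p\<in>{p\<in>{1..N}. p < q}. f p)"
    by (rule sum.inter_filter[symmetric]) simp
  also have "{p\<in>{1..N}. p < q} = {1..<q}" using assms by auto
  finally show ?thesis by simp
qed

lemma C3_sum: "(\<Sum>j=1..N. \<Sum>k=1..N. \<Sum>i=1..N. if i < k \<and> k < j then 1 else (0::nat)) = N choose 3"
proof -
  have i1: "(\<Sum>i=1..N. if i < k \<and> k < j then 1 else (0::nat)) = (if k < j then k - 1 else 0)" if "k \<le> N" for k j
  proof (cases "k < j")
    case True
    have "(\<Sum>i=1..N. if i < k \<and> k < j then 1 else (0::nat)) = card {i\<in>{1..N}. i < k}"
      using True by (simp add: sum.inter_filter[symmetric])
    also have "{i\<in>{1..N}. i < k} = {1..<k}" using that by auto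
    finally show ?thesis using True by simp
  qed simp
  have i2: "(\<Sum>k=1..<j. k - 1) = (j - 1) choose 2" for j
  proof (induction j)
    case 0 then show ?case by simp
  next
    case (Suc j)
    show ?case
    proof (cases j)
      case 0 then show ?thesis by simp
    next
      case (Suc j')
      have "(\<Sum>k=1..<Suc j. k - 1) = (\<Sum>k=1..<j. k - 1) + (j - 1)" using Suc by simp
      also have "\<dots> = (j - 1 choose 2) + (j - 1)" using Suc.IH by simp
      also have "\<dots> = Suc (j - 1) choose 2" by (simp add: numeral_2_eq_2)
      finally show ?thesis using Suc by simp
    qed
  qed
  have i3: "(\<Sum>k=1..N. if k < j then k - 1 else (0::nat)) = (j - 1) choose 2" if "j \<le> N" for j
    using inner_range[of j N "\<lambda>k. k - 1"] that i2[of j] by simp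
  have "(\<Sum>j=1..N. \<Sum>k=1..N. \<Sum>i=1..N. if i < k \<and> k < j then 1 else (0::nat))
      = (\<Sum>j=1..N. (j - 1) choose 2)"
  proof (intro sum.cong refl)
    fix j assume j: "j \<in> {1..N}"
    have "(\<Sum>k=1..N. \<Sum>i=1..N. if i < k \<and> k < j then 1 else (0::nat)) = (\<Sum>k=1..N. if k < j then k - 1 else (0::nat))"
      by (rule sum.cong[OF refl]) (rule i1, simp)
    then show "(\<Sum>k=1..N. \<Sum>i=1..N. if i < k \<and> k < j then 1 else (0::nat)) = (j - 1) choose 2"
      using i3 j by simp
  qed
  also have "\<dots> = N choose 3"
  proof (induction N)
    case 0 then show ?case by simp
  next
    case (Suc N)
    then show ?case by (simp add: numeral_3_eq_3 numeral_2_eq_2)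
  qed
  finally show ?thesis .
qed



lemma TL:
  assumes "N < v"
  shows "(\<Sum>q=1..N. \<Sum>p=1..<q. \<Sum>r=1..N. if r \<noteq> p \<and> r \<noteq> q \<and> (lt x p q r = x p v) then 1 else (0::nat))
         = Xs x v N + (N choose 3)"
proof -
  let ?f = "\<lambda>q p r. if r \<noteq> p \<and> r \<noteq> q \<and> (lt x p q r = x p v) then 1 else (0::nat)"
  let ?g1 = "\<lambda>q p r. if r < p \<and> p < q \<and> x r q = x p v then 1 else (0::nat)"
  let ?g2 = "\<lambda>q p r. if p < r \<and> r < q \<and> (\<not> x p q) = x p v then 1 else (0::nat)"
  let ?g3 = "\<lambda>q p r. if p < q \<and> q < r \<and> x p r = x p v then 1 else (0::nat)"
  have "(\<Sum>q=1..N. \<Sum>p=1..<q. \<Sum>r=1..N. ?f q p r) = (\<Sum>q=1..N. \<Sum>p=1..N. if p < q then (\<Sum>r=1..N. ?f q p r) else 0)"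
    by (intro sum.cong refl inner_range) simp
  also have "\<dots> = (\<Sum>q=1..N. \<Sum>p=1..N. \<Sum>r=1..N. ?g1 q p r + ?g2 q p r + ?g3 q p r)"
  proof (rule sum.cong[OF refl], rule sum.cong[OF refl])
    fix q p
    show "(if p < q then (\<Sum>r=1..N. ?f q p r) else 0) = (\<Sum>r=1..N. ?g1 q p r + ?g2 q p r + ?g3 q p r)"
    proof (cases "p < q")
      case True
      then have "(if p < q then (\<Sum>r=1..N. ?f q p r) else 0) = (\<Sum>r=1..N. ?f q p r)" by simp
      also have "\<dots> = (\<Sum>r=1..N. ?g1 q p r + ?g2 q p r + ?g3 q p r)"
        by (rule sum.cong[OF refl]) (use True in \<open>auto simp: lt_def\<close>)
      finally show ?thesis .
    next
      case False
      then show ?thesis by simp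
    qed
  qed
  also have "\<dots> = (\<Sum>q=1..N. \<Sum>p=1..N. \<Sum>r=1..N. ?g1 q p r) + (\<Sum>q=1..N. \<Sum>p=1..N. \<Sum>r=1..N. ?g2 q p r)
       + (\<Sum>q=1..N. \<Sum>p=1..N. \<Sum>r=1..N. ?g3 q p r)"
    by (simp add: sum.distrib)
  also have "(\<Sum>q=1..N. \<Sum>p=1..N. \<Sum>r=1..N. ?g1 q p r) = Xs x v N" unfolding Xs_def by simp
  also have "(\<Sum>q=1..N. \<Sum>p=1..N. \<Sum>r=1..N. ?g2 q p r)
       = (\<Sum>j=1..N. \<Sum>k=1..N. \<Sum>i=1..N. if i < k \<and> k < j \<and> (\<not> x i j) = x i v then 1 else (0::nat))"
    by (rule sum.cong[OF refl], rule sum.swap)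
  also have "(\<Sum>q=1..N. \<Sum>p=1..N. \<Sum>r=1..N. ?g3 q p r)
       = (\<Sum>q=1..N. \<Sum>r=1..N. \<Sum>p=1..N. ?g3 q p r)"
    by (rule sum.cong[OF refl], rule sum.swap)
  also have "\<dots> = (\<Sum>j=1..N. \<Sum>k=1..N. \<Sum>i=1..N. if i < k \<and> k < j \<and> x i j = x i v then 1 else (0::nat))"
    by (rule sum.swap)
  finally have E: "(\<Sum>q=1..N. \<Sum>p=1..<q. \<Sum>r=1..N. ?f q p r) = Xs x v N +
      ((\<Sum>j=1..N. \<Sum>k=1..N. \<Sum>i=1..N. if i < k \<and> k < j \<and> (\<not> x i j) = x i v then 1 else (0::nat))
     + (\<Sum>j=1..N. \<Sum>k=1..N. \<Sum>i=1..N. if i < k \<and> k < j \<and> x i j = x i v then 1 else (0::nat)))"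
    by simp
  have "(\<Sum>j=1..N. \<Sum>k=1..N. \<Sum>i=1..N. if i < k \<and> k < j \<and> (\<not> x i j) = x i v then 1 else (0::nat))
     + (\<Sum>j=1..N. \<Sum>k=1..N. \<Sum>i=1..N. if i < k \<and> k < j \<and> x i j = x i v then 1 else (0::nat))
     = (\<Sum>j=1..N. \<Sum>k=1..N. \<Sum>i=1..N. if i < k \<and> k < j then 1 else (0::nat))"
    by (simp add: sum.distrib[symmetric]) (intro sum.cong refl, auto)
  then show ?thesis using E C3_sum by simp
qed



definition G :: "nat \<Rightarrow> nat \<Rightarrow> nat" where
  "G n L = (L choose 2) + ((n - 2 - L) choose 2)"

lemma sum_choose2: "(\<Sum>j<n. j choose 2) = n choose 3"
  by (induction n) (simp_all add: numeral_3_eq_3 numeral_2_eq_2)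

lemma vertex_G:
  "(\<Sum>p=1..<Suc n. G (Suc n) (Lf x 1 (Suc n) p (Suc n))) = 2 * (n choose 3)"
proof -
  have "(\<Sum>p=1..<Suc n. G (Suc n) (Lf x 1 (Suc n) p (Suc n))) = (\<Sum>j<n. G (Suc n) j)"
    using sum_max[of 1 "Suc n" "G (Suc n)" x] by simp
  also have "\<dots> = (\<Sum>j<n. j choose 2) + (\<Sum>j<n. (n - Suc j) choose 2)"
    unfolding G_def by (simp add: sum.distrib)
  also have "(\<Sum>j<n. (n - Suc j) choose 2) = (\<Sum>j<n. j choose 2)"
    by (rule sum.nat_diff_reindex)
  finally show ?thesis using sum_choose2 by simp
qed

lemma edge_G:
  assumes "1 \<le> p" "p < q" "q \<le> n"
  shows "G (Suc n) (Lf x 1 (Suc n) p q) = G n (Lf x 1 n p q)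
     + (\<Sum>r=1..n. if r \<noteq> p \<and> r \<noteq> q \<and> (lt x p q r = x p (Suc n)) then 1 else (0::nat))"
proof -
  have e: "Lf x 1 (Suc n) p q = Lf x 1 n p q + (if x p (Suc n) then 1 else 0)"
    using Lf_Suc_b assms by blast
  have le: "Lf x 1 n p q \<le> n - 2" using Lf_le[OF assms, of x] by (simp add: numeral_2_eq_2)
  show ?thesis
  proof (cases "x p (Suc n)")
    case True
    have S: "(\<Sum>r=1..n. if r \<noteq> p \<and> r \<noteq> q \<and> (lt x p q r = x p (Suc n)) then 1 else (0::nat)) = Lf x 1 n p q"
      unfolding Lf_def using True by simp
    have "n - 2 - Lf x 1 n p q = Suc n - 2 - (Lf x 1 n p q + 1)" using le assms by simp
    then show ?thesis unfolding G_def e S using True by (simp add: numeral_2_eq_2)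
  next
    case False
    have S: "(\<Sum>r=1..n. if r \<noteq> p \<and> r \<noteq> q \<and> (lt x p q r = x p (Suc n)) then 1 else (0::nat)) = n - 2 - Lf x 1 n p q"
      using Rg_eq[OF assms, of x] False by simp
    have "Suc n - 2 - Lf x 1 n p q = Suc (n - 2 - Lf x 1 n p q)" using le assms by simp
    then show ?thesis unfolding G_def e S using False by (simp add: numeral_2_eq_2)
  qed
qed

lemma CI: "crossings n x + 3 * (n choose 4) = (\<Sum>q=1..n. \<Sum>p=1..<q. G n (Lf x 1 n p q))"
proof (induction n)
  case 0
  have E: "{(i, k, j, l). 1 \<le> i \<and> i < k \<and> k < j \<and> j < l \<and> l \<le> (0::nat) \<and> x i j = x k l} = {}" by auto
  have "crossings 0 x = 0" unfolding crossings_def E by simp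
  then show ?case by simp
next
  case (Suc n)
  have "(\<Sum>q=1..Suc n. \<Sum>p=1..<q. G (Suc n) (Lf x 1 (Suc n) p q))
     = (\<Sum>q=1..n. \<Sum>p=1..<q. G (Suc n) (Lf x 1 (Suc n) p q)) + (\<Sum>p=1..<Suc n. G (Suc n) (Lf x 1 (Suc n) p (Suc n)))"
    by (simp add: sum.cl_ivl_Suc)
  also have "(\<Sum>q=1..n. \<Sum>p=1..<q. G (Suc n) (Lf x 1 (Suc n) p q))
     = (\<Sum>q=1..n. \<Sum>p=1..<q. G n (Lf x 1 n p q) + (\<Sum>r=1..n. if r \<noteq> p \<and> r \<noteq> q \<and> (lt x p q r = x p (Suc n)) then 1 else (0::nat)))"
    by (rule sum.cong[OF refl], rule sum.cong[OF refl], rule edge_G) auto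
  also have "\<dots> = (\<Sum>q=1..n. \<Sum>p=1..<q. G n (Lf x 1 n p q)) + (Xs x (Suc n) n + (n choose 3))"
    using TL[of n "Suc n" x] by (simp add: sum.distrib)
  finally show ?case using Suc.IH cr_rec[of n x] vertex_G[of n x]
    by (simp add: numeral_3_eq_3 numeral_2_eq_2 eval_nat_numeral)
qed



lemma choose2_real: "real (a choose 2) = real a * (real a - 1) / 2"
  by (induction a) (auto simp: numeral_2_eq_2 algebra_simps add_divide_distrib)

lemma choose3_real: "real (a choose 3) = real a * (real a - 1) * (real a - 2) / 6"
proof (induction a)
  case 0 then show ?case by simp
next
  case (Suc a)
  have "Suc a choose 3 = (a choose 2) + (a choose 3)" by (simp add: numeral_3_eq_3 numeral_2_eq_2)
  then show ?case using Suc choose2_real[of a] by (simp add: field_simps)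
qed

lemma choose4_real: "real (a choose 4) = real a * (real a - 1) * (real a - 2) * (real a - 3) / 24"
proof (induction a)
  case 0 then show ?case by simp
next
  case (Suc a)
  have "Suc a choose 4 = (a choose 3) + (a choose 4)" by (simp add: eval_nat_numeral)
  then show ?case using Suc choose3_real[of a] by (simp add: field_simps)
qed

lemma sum_trunc: "(\<Sum>u<K. u - k) = (K - k) choose 2"
proof (induction K)
  case 0 then show ?case by simp
next
  case (Suc K)
  show ?case
  proof (cases "k \<le> K")
    case True
    then have "Suc K - k = Suc (K - k)" by simp
    then show ?thesis using Suc True by (simp add: numeral_2_eq_2)
  next
    case False
    then have "Suc K - k = 0 \<or> Suc K - k = 1" by auto
    then show ?thesis using Suc False by auto
  qed
qed

lemma G_edge:
  assumes "L \<le> m"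
  shows "(L choose 2) + ((m - L) choose 2) = (m div 2 choose 2) + ((m - m div 2) choose 2)
     + 2 * ((m div 2 - min L (m - L)) choose 2) + (m - 2 * (m div 2) + 1) * (m div 2 - min L (m - L))"
proof -
  define K where "K = m div 2"
  define k where "k = min L (m - L)"
  have kK: "k \<le> K" unfolding k_def K_def by auto
  have Km: "2 * K \<le> m" unfolding K_def by auto
  have sym: "(L choose 2) + ((m - L) choose 2) = (k choose 2) + ((m - k) choose 2)"
    unfolding k_def using assms by (auto simp: min_def)
  have km: "k \<le> m" using kK Km by simp
  have e1: "real (m - k) = real m - real k" using km by simp
  have e2: "real (m - K) = real m - real K" using Km by simp
  have e3: "real (K - k) = real K - real k" using kK by simp
  have e4: "real (m - 2*K) = real m - 2*real K" using Km by simp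
  have l: "real ((k choose 2) + ((m - k) choose 2)) = real k*(real k-1)/2 + (real m - real k)*(real m - real k - 1)/2"
    by (simp only: of_nat_add choose2_real e1)
  have r: "real ((K choose 2) + ((m - K) choose 2) + 2 * ((K - k) choose 2) + (m - 2 * K + 1) * (K - k))
     = real K*(real K-1)/2 + (real m - real K)*(real m - real K-1)/2 + 2*((real K - real k)*(real K - real k - 1)/2) + (real m - 2*real K + 1)*(real K - real k)"
    by (simp only: of_nat_add of_nat_mult choose2_real e2 e3 e4 of_nat_numeral of_nat_1)
  have "real k*(real k-1)/2 + (real m - real k)*(real m - real k - 1)/2
     = real K*(real K-1)/2 + (real m - real K)*(real m - real K-1)/2 + 2*((real K - real k)*(real K - real k - 1)/2) + (real m - 2*real K + 1)*(real K - real k)"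
    by (simp add: field_simps)
  then have "real ((k choose 2) + ((m - k) choose 2)) = real ((K choose 2) + ((m - K) choose 2)
     + 2 * ((K - k) choose 2) + (m - 2 * K + 1) * (K - k))" using l r by simp
  then have "(k choose 2) + ((m - k) choose 2) = (K choose 2) + ((m - K) choose 2)
     + 2 * ((K - k) choose 2) + (m - 2 * K + 1) * (K - k)" by linarith
  then show ?thesis unfolding K_def[symmetric] k_def[symmetric] by (rule trans[OF sym])
qed

lemma sum_tetra: "4 * (\<Sum>u<K. u*(u+1)*(u+2)) = (K - 1) * K * (K+1) * (K+(2::nat))"
proof (induction K)
  case 0 then show ?case by simp
next
  case (Suc K)
  then show ?case by (cases K) (simp_all add: algebra_simps)
qed

lemma edges_count: "(\<Sum>q=1..n. \<Sum>p=1..<q. (1::nat)) = n choose 2"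
proof (induction n)
  case 0 then show ?case by simp
next
  case (Suc n) then show ?case by (simp add: numeral_2_eq_2)
qed



lemma Z_even:
  assumes "1 \<le> K"
  shows "4 * Z (2*K+2) = 4 * real ((2*K+2) choose 2) * real ((K choose 2) + (K choose 2))
     + real ((K - 1) * K * (K+1) * (K+2)) + 2 * real K * (real K + 1) * (real K + 2)
     - 12 * real ((2*K+2) choose 4)"
proof -
  have d: "(2*K+2) div 2 = K+1" "(2*K+2-1) div 2 = K" "(2*K+2-2) div 2 = K" "(2*K+2-3) div 2 = K - 1"
    using assms by auto
  have r: "real (K - 1) = real K - 1" "real (K - Suc 0) = real K - 1" using assms by auto
  show ?thesis unfolding Z_def d
    by (simp add: choose2_real choose4_real r of_nat_diff field_simps)
qed

lemma Z_odd:
  shows "4 * Z (2*K+3) = 4 * real ((2*K+3) choose 2) * real ((K choose 2) + ((K+1) choose 2))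
     + real ((K - 1) * K * (K+1) * (K+2)) + 2 * 2 * real K * (real K + 1) * (real K + 2)
     - 12 * real ((2*K+3) choose 4)"
proof (cases "K = 0")
  case True
  then show ?thesis by (simp add: Z_def choose2_real choose4_real)
next
  case False
  have d: "(2*K+3) div 2 = K+1" "(2*K+3-1) div 2 = K+1" "(2*K+3-2) div 2 = K" "(2*K+3-3) div 2 = K"
    by auto
  have r: "real (K - 1) = real K - 1" "real (K - Suc 0) = real K - 1" using False by auto
  show ?thesis unfolding Z_def d
    by (simp add: choose2_real choose4_real r of_nat_diff field_simps)
qed



lemma main_nat:
  assumes n: "2 \<le> n"
  defines "K \<equiv> n div 2 - 1"
  defines "c \<equiv> (n - 2) - 2 * K + 1"
  defines "GK \<equiv> (K choose 2) + ((n - 2 - K) choose 2)"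
  shows "4 * (crossings n up + 3 * (n choose 4)) \<ge> 4 * (n choose 2) * GK + (K - 1) * K * (K+1) * (K+2)
     + 2 * c * (K * (K+1) * (K+2))
     + (if n div 2 \<le> p \<and> p < q \<and> q + K \<le> n \<and> kv up 1 n p q < K then 4 * c else 0)"
proof -
  have mK: "(n - 2) div 2 = K" unfolding K_def using n by linarith
  let ?k = "\<lambda>p q. kv up 1 n p q"
  have S: "crossings n up + 3 * (n choose 4) = (\<Sum>q=1..n. \<Sum>p=1..<q. G n (Lf up 1 n p q))"
    by (rule CI)
  have edge: "G n (Lf up 1 n p q) = GK + 2 * ((K - ?k p q) choose 2) + c * (K - ?k p q)"
    if "q \<in> {1..n}" "p \<in> {1..<q}" for p q
  proof -
    have le: "Lf up 1 n p q \<le> n - 2" using Lf_le[of 1 p q n up] that by (simp add: numeral_2_eq_2)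
    have kk: "?k p q = min (Lf up 1 n p q) (n - 2 - Lf up 1 n p q)" unfolding kv_def by (simp add: numeral_2_eq_2)
    have H: "(Lf up 1 n p q choose 2) + ((n-2-Lf up 1 n p q) choose 2) = (K choose 2) + ((n-2-K) choose 2)
       + 2*((K - min (Lf up 1 n p q) (n-2-Lf up 1 n p q)) choose 2) + (n - 2 - 2*K + 1)*(K - min (Lf up 1 n p q) (n-2-Lf up 1 n p q))"
      using G_edge[OF le] unfolding mK .
    show ?thesis unfolding G_def kk GK_def c_def by (rule H)
  qed
  have "(\<Sum>q=1..n. \<Sum>p=1..<q. G n (Lf up 1 n p q))
      = (\<Sum>q=1..n. \<Sum>p=1..<q. GK * 1 + 2 * ((K - ?k p q) choose 2) + c * (K - ?k p q))"
    by (rule sum.cong[OF refl], rule sum.cong[OF refl]) (subst edge, assumption+, simp)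
  also have "\<dots> = GK * (\<Sum>q=1..n. \<Sum>p=1..<q. 1) + 2 * (\<Sum>q=1..n. \<Sum>p=1..<q. (K - ?k p q) choose 2)
       + c * (\<Sum>q=1..n. \<Sum>p=1..<q. K - ?k p q)"
    by (simp only: sum.distrib sum_distrib_left)
  also have "(\<Sum>q=1..n. \<Sum>p=1..<q. (1::nat)) = n choose 2" by (rule edges_count)
  also have "(\<Sum>q=1..n. \<Sum>p=1..<q. (K - ?k p q) choose 2) = (\<Sum>q=1..n. \<Sum>p=1..<q. \<Sum>u<K. u - ?k p q)"
    by (simp add: sum_trunc)
  also have "\<dots> = (\<Sum>q=1..n. \<Sum>u<K. \<Sum>p=1..<q. u - ?k p q)"
    by (rule sum.cong[OF refl], rule sum.swap)
  also have "\<dots> = (\<Sum>u<K. Wt up u 1 n)" unfolding Wt_def by (rule sum.swap)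
  also have "(\<Sum>q=1..n. \<Sum>p=1..<q. K - ?k p q) = Wt up K 1 n" unfolding Wt_def by simp
  finally have T: "crossings n up + 3 * (n choose 4) = GK * (n choose 2) + 2 * (\<Sum>u<K. Wt up u 1 n) + c * Wt up K 1 n"
    using S by simp
  have B1: "2 * (\<Sum>u<K. Wt up u 1 n) \<ge> (\<Sum>u<K. u*(u+1)*(u+2))"
  proof -
    have "2 * Wt up u 1 n \<ge> u*(u+1)*(u+2)" if "u < K" for u
      using WtB[where v=u and b=n and a=1 and x=up and p=0 and q=0] that unfolding K_def by simp
    then have "(\<Sum>u<K. u*(u+1)*(u+2)) \<le> (\<Sum>u<K. 2 * Wt up u 1 n)" by (intro sum_mono) simp
    then show ?thesis by (simp add: sum_distrib_left)
  qed
  have B2: "2 * Wt up K 1 n \<ge> K*(K+1)*(K+2) + (if n div 2 \<le> p \<and> p < q \<and> q + K \<le> n \<and> kv up 1 n p q < K then 2 else 0)"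
  proof -
    have "2 * K \<le> n - 1" unfolding K_def by simp
    moreover have "(1 + K \<le> p) = (n div 2 \<le> p)" unfolding K_def using n by auto
    ultimately show ?thesis using WtB[where v=K and b=n and a=1 and x=up and p=p and q=q] by simp
  qed
  have B3: "4 * (\<Sum>u<K. u*(u+1)*(u+2)) = (K - 1) * K * (K+1) * (K+2)" by (rule sum_tetra)
  define A where "A = (\<Sum>u<K. Wt up u 1 n)"
  define W where "W = Wt up K 1 n"
  define T1 where "T1 = (\<Sum>u<K. u*(u+1)*(u+2))"
  have T': "4 * (crossings n up + 3 * (n choose 4)) = 4 * (n choose 2) * GK + 4 * (2 * A) + 2 * (c * (2 * W))"
    using T unfolding A_def W_def by (simp add: algebra_simps)
  have B1': "2 * A \<ge> T1" using B1 unfolding A_def T1_def .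
  have B3': "4 * T1 = (K - 1) * K * (K+1) * (K+2)" using B3 unfolding T1_def .
  show ?thesis
  proof (cases "n div 2 \<le> p \<and> p < q \<and> q + K \<le> n \<and> kv up 1 n p q < K")
    case True
    then have "2 * W \<ge> K*(K+1)*(K+2) + 2" using B2 unfolding W_def by simp
    then have "c * (2 * W) \<ge> c * (K*(K+1)*(K+2) + 2)" by (rule mult_left_mono) simp
    then have "4 * (crossings n up + 3 * (n choose 4)) \<ge> 4 * (n choose 2) * GK + (K - 1) * K * (K+1) * (K+2)
     + 2 * c * (K * (K+1) * (K+2)) + 4 * c"
      using T' B1' B3' by (simp add: algebra_simps)
    then show ?thesis using True by simp
  next
    case False
    then have "2 * W \<ge> K*(K+1)*(K+2)" using B2 unfolding W_def by simp
    then have "c * (2 * W) \<ge> c * (K*(K+1)*(K+2))" by (rule mult_left_mono) simp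
    then have "4 * (crossings n up + 3 * (n choose 4)) \<ge> 4 * (n choose 2) * GK + (K - 1) * K * (K+1) * (K+2)
     + 2 * c * (K * (K+1) * (K+2))"
      using T' B1' B3' by (simp add: algebra_simps)
    then show ?thesis by (simp only: if_not_P[OF False] add_0_right)
  qed
qed



lemma ccw_lt:
  assumes "p < q" "r \<noteq> p" "r \<noteq> q"
  shows "ccw up p q r = lt up p q r"
proof -
  consider "r < p" | "p < r \<and> r < q" | "q < r" using assms by linarith
  then show ?thesis
  proof cases
    case 1 then show ?thesis using assms unfolding ccw_def lt_def Let_def by (simp add: min_def max_def)
  next
    case 2 then show ?thesis using assms unfolding ccw_def lt_def Let_def by (simp add: min_def max_def)
  next
    case 3 then show ?thesis using assms unfolding ccw_def lt_def Let_def by (simp add: min_def max_def)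
  qed
qed

lemma card_left:
  assumes "1 \<le> p" "p < q" "q \<le> n"
  shows "card (left_of n up p q) = Lf up 1 n p q"
proof -
  have "left_of n up p q = {r\<in>{1..n}. r \<noteq> p \<and> r \<noteq> q \<and> lt up p q r}"
    unfolding left_of_def using ccw_lt[OF assms(2)] by auto
  moreover have "card {r\<in>{1..n}. r \<noteq> p \<and> r \<noteq> q \<and> lt up p q r} = Lf up 1 n p q"
    unfolding Lf_def using sum.inter_filter[of "{1..n}" "\<lambda>_. (1::nat)" "\<lambda>r. r \<noteq> p \<and> r \<noteq> q \<and> lt up p q r"] by simp
  ultimately show ?thesis by simp
qed

lemma card_right:
  assumes "1 \<le> p" "p < q" "q \<le> n"
  shows "card (right_of n up p q) = n - 2 - Lf up 1 n p q"
proof -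
  have "right_of n up p q = {r\<in>{1..n}. r \<noteq> p \<and> r \<noteq> q \<and> \<not> lt up p q r}"
    unfolding right_of_def using ccw_lt[OF assms(2)] by auto
  moreover have "card {r\<in>{1..n}. r \<noteq> p \<and> r \<noteq> q \<and> \<not> lt up p q r} = (\<Sum>r=1..n. if r \<noteq> p \<and> r \<noteq> q \<and> \<not> lt up p q r then 1 else (0::nat))"
    using sum.inter_filter[of "{1..n}" "\<lambda>_. (1::nat)" "\<lambda>r. r \<noteq> p \<and> r \<noteq> q \<and> \<not> lt up p q r"] by simp
  moreover have "\<dots> = n - Suc 1 - Lf up 1 n p q" by (rule Rg_eq[OF assms])
  ultimately show ?thesis by (simp add: numeral_2_eq_2)
qed

lemma halving_of:
  assumes "1 \<le> p" "p < q" "q \<le> n" "\<not> kv up 1 n p q < n div 2 - 1"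
  shows "halving_edge n up p q"
proof -
  define L where "L = Lf up 1 n p q"
  have k: "kv up 1 n p q = min L (n - 2 - L)" unfolding kv_def L_def by (simp add: numeral_2_eq_2)
  have le: "L \<le> n - 2" using Lf_le[OF assms(1-3), of up] unfolding L_def by (simp add: numeral_2_eq_2)
  have "L = n div 2 - 1 \<or> n - 2 - L = n div 2 - 1" using assms(4) le unfolding k by (auto simp: min_def) arith+
  then show ?thesis unfolding halving_edge_def is_k_edge_def
    using card_left[OF assms(1-3), of up] card_right[OF assms(1-3), of up] unfolding L_def by auto
qed

lemma Zid:
  assumes "3 \<le> n"
  defines "K \<equiv> n div 2 - 1"
  defines "c \<equiv> (n - 2) - 2 * K + 1"
  defines "GK \<equiv> (K choose 2) + ((n - 2 - K) choose 2)"
  shows "4 * Z n = 4 * real (n choose 2) * real GK + real ((K - 1) * K * (K+1) * (K+2))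
     + 2 * real c * (real K * (real K + 1) * (real K + 2)) - 12 * real (n choose 4)"
proof (cases "even n")
  case True
  define h where "h = n div 2 - 1"
  have h: "n = 2*h+2" using True assms unfolding h_def by presburger
  then have Kh: "K = h" "c = 1" "n - 2 - K = h" unfolding K_def c_def by auto
  have "1 \<le> h" using h assms by simp
  then show ?thesis using Z_even[of h] unfolding GK_def Kh h by (simp add: algebra_simps)
next
  case False
  define h where "h = n div 2 - 1"
  have h: "n = 2*h+3" using False assms unfolding h_def by presburger
  then have Kh: "K = h" "c = 2" "n - 2 - K = h + 1" unfolding K_def c_def by auto
  show ?thesis using Z_odd[of h] unfolding GK_def Kh h by (simp add: algebra_simps)
qed

lemma not_small:
  assumes "3 \<le> n" "crossing_optimal n up" "n div 2 \<le> p" "p < q" "q + (n div 2 - 1) \<le> n"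
  shows "\<not> kv up 1 n p q < n div 2 - 1"
proof
  assume kk: "kv up 1 n p q < n div 2 - 1"
  define K where "K = n div 2 - 1"
  define c where "c = (n - 2) - 2 * K + 1"
  define GK where "GK = (K choose 2) + ((n - 2 - K) choose 2)"
  have n2: "2 \<le> n" using assms by simp
  have flag: "n div 2 \<le> p \<and> p < q \<and> q + K \<le> n \<and> kv up 1 n p q < K" using assms kk unfolding K_def by simp
  note M0 = main_nat[where n=n and up=up and p=p and q=q, OF n2, folded K_def, folded c_def GK_def]
  have M: "4 * (crossings n up + 3 * (n choose 4)) \<ge> 4 * (n choose 2) * GK + (K - 1) * K * (K+1) * (K+2)
     + 2 * c * (K * (K+1) * (K+2)) + 4 * c"
    using M0 unfolding if_P[OF flag] .
  have "real (4 * (crossings n up + 3 * (n choose 4))) \<ge> real (4 * (n choose 2) * GK + (K - 1) * K * (K+1) * (K+2)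
     + 2 * c * (K * (K+1) * (K+2)) + 4 * c)"
    using M by (simp only: of_nat_le_iff)
  then have "4 * real (crossings n up) \<ge> 4 * Z n + 4 * real c"
    using Zid[OF assms(1)] unfolding K_def[symmetric] c_def[symmetric] GK_def[symmetric]
    by (simp add: algebra_simps)
  moreover have "c \<ge> 1" unfolding c_def by simp
  moreover have "real (crossings n up) = Z n" using assms(2) unfolding crossing_optimal_def .
  ultimately show False by simp
qed



lemma edge_ok:
  assumes "3 \<le> n" "crossing_optimal n up" "n div 2 \<le> p" "p < q" "q + (n div 2 - 1) \<le> n"
  shows "halving_edge n up p q"
proof -
  have "1 \<le> p" "q \<le> n" using assms by auto
  then show ?thesis using halving_of not_small[OF assms] assms(4) by blast
qed

theorem lemma16:
  fixes n :: nat and up :: "nat \<Rightarrow> nat \<Rightarrow> bool"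
  assumes "normalized_2page n up"
    and "crossing_optimal n up"
  shows "halving_edge n up (n div 2) ((n + 1) div 2 + 1)
       \<and> halving_edge n up (n div 2) (n div 2 + 1)
       \<and> halving_edge n up ((n + 1) div 2) ((n + 1) div 2 + 1)"
proof -
  have n: "3 \<le> n" using assms(1) unfolding normalized_2page_def by simp
  show ?thesis
  proof (intro conjI)
    show "halving_edge n up (n div 2) ((n + 1) div 2 + 1)"
      by (rule edge_ok[OF n assms(2)]) (use n in presburger)+
    show "halving_edge n up (n div 2) (n div 2 + 1)"
      by (rule edge_ok[OF n assms(2)]) (use n in presburger)+
    show "halving_edge n up ((n + 1) div 2) ((n + 1) div 2 + 1)"
      by (rule edge_ok[OF n assms(2)]) (use n in presburger)+
  qed
qed


end
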